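(* Let $f:\mathbb{R}^n\to\mathbb{R}$ be $C^2$ smooth and let $h:\mathbb{R}^n\to(-\infty,\infty]$ be proper, closed and convex. Fix $x\in\mathbb{R}^n$ and suppose that $\nabla^2 f(x)$ is positive semidefinite and $0<t<\frac{1}{\lambda_{\max}(\nabla^2 f(x))}$. Let $F_{\mathrm{PGM}}(y):=y-\mathrm{prox}_{th}(y-t\nabla f(y))$. Then $F_{\mathrm{PGM}}$ is BD-regular at $x$ if and only if, for every $M\in\partial_B\,\mathrm{prox}_{th}(x-t\nabla f(x))$, the matrix $\nabla^2 f(x)$ is positive definite on the subspace $\mathrm{Ker}(I-M)$, i.e. $d^\top\nabla^2 f(x)d>0$ for all nonzero $d$ with $(I-M)d=0$.
   Context: For $t>0$ and a proper closed function $\phi$, $\mathrm{prox}_{t\phi}(y)=\arg\min_{x}\{\phi(x)+\frac{1}{2t}\|x-y\|^2\}$ (single-valued and $1$-Lipschitz when $\phi$ is convex). For a locally Lipschitz mapping $G:\mathbb{R}^n\to\mathbb{R}^n$ with differentiability set $D_G$, the B-Jacobian is $\partial_B G(x)=\{\lim_k J(x^k): x^k\in D_G, x^k\to x\}$, where $J(x^k)$ is the Jacobian of $G$ at $x^k$. $G$ is called BD-regular at $x$ if every element of $\partial_B G(x)$ is nonsingular. $\lambda_{\max}$ denotes the largest eigenvalue (if it is $0$, the condition on $t$ is just $t>0$). *)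

theory Defs
  imports "HOL-Analysis.Analysis"
begin

definition proper_fun :: "('a \<Rightarrow> ereal) \<Rightarrow> bool" where
  "proper_fun h \<longleftrightarrow> (\<forall>y. h y \<noteq> -\<infinity>) \<and> (\<exists>y. h y \<noteq> \<infinity>)"

definition epigraph :: "('a \<Rightarrow> ereal) \<Rightarrow> ('a \<times> real) set" where
  "epigraph h = {(y, r). h y \<le> ereal r}"

definition closed_fun :: "('a::topological_space \<Rightarrow> ereal) \<Rightarrow> bool" where
  "closed_fun h \<longleftrightarrow> closed (epigraph h)"

definition convex_fun :: "('a::real_vector \<Rightarrow> ereal) \<Rightarrow> bool" where
  "convex_fun h \<longleftrightarrow> convex (epigraph h)"

text \<open>Proximal mapping: prox_{t phi}(y) = argmin_x { phi x + ||x - y||^2 / (2t) }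
  (the unique minimiser; single-valued when phi is proper, closed, convex and t > 0).\<close>

definition prox :: "real \<Rightarrow> ('a::real_normed_vector \<Rightarrow> ereal) \<Rightarrow> 'a \<Rightarrow> 'a" where
  "prox t \<phi> y = (THE x. \<forall>z. \<phi> x + ereal (norm (x - y)^2 / (2 * t))
                              \<le> \<phi> z + ereal (norm (z - y)^2 / (2 * t)))"

definition bjac :: "(real^'n \<Rightarrow> real^'m) \<Rightarrow> real^'n \<Rightarrow> (real^'n^'m) set" where
  "bjac G x = {M. \<exists>s J. (\<forall>k. (G has_derivative (\<lambda>v. J k *v v)) (at (s k)))
                         \<and> s \<longlonglongrightarrow> x \<and> J \<longlonglongrightarrow> M}"

definition bd_regular :: "(real^'n \<Rightarrow> real^'n) \<Rightarrow> real^'n \<Rightarrow> bool" where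
  "bd_regular G x \<longleftrightarrow> (\<forall>M \<in> bjac G x. invertible M)"

definition eigenvalues :: "real^'n^'n \<Rightarrow> real set" where
  "eigenvalues A = {c. \<exists>v. v \<noteq> 0 \<and> A *v v = c *\<^sub>R v}"

definition lambda_max :: "real^'n^'n \<Rightarrow> real" where
  "lambda_max A = Max (eigenvalues A)"

end

theory Submission
  imports Defs "HOL-Analysis.Analysis"
begin


lemma tendsto_mvec:
  fixes X :: "'a \<Rightarrow> real^'n^'m"
  assumes "(X \<longlongrightarrow> M) F"
  shows "((\<lambda>k. X k *v v) \<longlongrightarrow> M *v v) F"
proof -
  have "\<And>i j. ((\<lambda>k. X k $ i $ j) \<longlongrightarrow> M $ i $ j) F"
    using assms by (intro tendsto_vec_nth) 
  note h = this
  show ?thesis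
    unfolding matrix_vector_mult_def
    by (intro vec_tendstoI) (auto intro!: tendsto_intros h)
qed

lemma tendsto_mmul:
  fixes X :: "'a \<Rightarrow> real^'n^'m" and Y :: "'a \<Rightarrow> real^'k^'n"
  assumes "(X \<longlongrightarrow> M) F" "(Y \<longlongrightarrow> N) F"
  shows "((\<lambda>k. X k ** Y k) \<longlongrightarrow> M ** N) F"
proof -
  have "\<And>i j. ((\<lambda>k. X k $ i $ j) \<longlongrightarrow> M $ i $ j) F" "\<And>i j. ((\<lambda>k. Y k $ i $ j) \<longlongrightarrow> N $ i $ j) F"
    using assms by (auto intro!: tendsto_vec_nth)
  note h = this
  show ?thesis
    unfolding matrix_matrix_mult_def
    by (intro vec_tendstoI) (auto intro!: tendsto_intros h)
qed

lemma psd_zero: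
  fixes H :: "real^'n^'n"
  assumes psd: "\<And>d. 0 \<le> d \<bullet> (H *v d)"
    and sym: "\<And>u v. u \<bullet> (H *v v) = v \<bullet> (H *v u)"
    and z: "d \<bullet> (H *v d) = 0"
  shows "H *v d = 0"
proof (rule ccontr)
  assume ne: "H *v d \<noteq> 0"
  define w where "w = H *v d"
  define a where "a = w \<bullet> w"
  define c where "c = w \<bullet> (H *v w)"
  have a: "a > 0" using ne by (simp add: a_def w_def)
  have c: "c \<ge> 0" using psd by (simp add: c_def)
  define s where "s = - a / (c + 1)"
  have "0 \<le> (d + s *\<^sub>R w) \<bullet> (H *v (d + s *\<^sub>R w))" by (rule psd)
  also have "\<dots> = d \<bullet> (H *v d) + 2 * s * (w \<bullet> (H *v d)) + s * s * c"
    using sym[of d w]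
    by (simp add: c_def matrix_vector_right_distrib matrix_vector_mult_scaleR
        inner_add_left inner_add_right algebra_simps)
  also have "\<dots> = 2 * s * a + s * s * c" using z by (simp add: a_def w_def)
  also have "\<dots> = a * a * (- c - 2) / ((c + 1) * (c + 1))"
  proof -
    have "c + 1 > 0" using c by simp
    then show ?thesis unfolding s_def by (simp add: divide_simps) (simp add: algebra_simps)
  qed
  also have "\<dots> < 0" using a c
    by (intro divide_neg_pos mult_pos_neg) auto
  finally show False by simp
qed



lemma eig_finite:
  fixes H :: "real^'n^'n"
  assumes sym: "\<And>u v. u \<bullet> (H *v v) = v \<bullet> (H *v u)"
  shows "finite (eigenvalues H)"
proof -
  define E where "E = eigenvalues H"
  define vv where "vv c = (SOME v. v \<noteq> 0 \<and> H *v v = c *\<^sub>R v)" for c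
  have vv: "vv c \<noteq> 0 \<and> H *v vv c = c *\<^sub>R vv c" if "c \<in> E" for c
  proof -
    have "\<exists>v. v \<noteq> 0 \<and> H *v v = c *\<^sub>R v" using that unfolding E_def eigenvalues_def by simp
    then show ?thesis unfolding vv_def by (rule someI_ex)
  qed
  have inj: "inj_on vv E"
  proof (rule inj_onI)
    fix c d assume "c \<in> E" "d \<in> E" "vv c = vv d"
    then have "c *\<^sub>R vv c = d *\<^sub>R vv c" using vv by metis
    then show "c = d" using vv[OF \<open>c \<in> E\<close>] by (simp add: scaleR_cancel_right)
  qed
  have orth: "pairwise orthogonal (vv ` E)"
  proof (auto simp: pairwise_def)
    fix c d assume c: "c \<in> E" and d: "d \<in> E" and ne: "vv c \<noteq> vv d"
    then have "c \<noteq> d" by auto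
    have "c * (vv d \<bullet> vv c) = vv d \<bullet> (H *v vv c)" using vv[OF c] by simp
    also have "\<dots> = vv c \<bullet> (H *v vv d)" by (rule sym)
    also have "\<dots> = d * (vv c \<bullet> vv d)" using vv[OF d] by simp
    finally have "(c - d) * (vv c \<bullet> vv d) = 0" by (simp add: inner_commute algebra_simps)
    then show "orthogonal (vv c) (vv d)" using \<open>c \<noteq> d\<close> by (simp add: orthogonal_def)
  qed
  have "0 \<notin> vv ` E" using vv by auto
  then have "independent (vv ` E)" using orth pairwise_orthogonal_independent by blast
  then have "finite (vv ` E)" by (rule finiteI_independent)
  then show ?thesis using inj finite_imageD E_def by blast
qed

lemma A_injective:
  fixes H :: "real^'n^'n"
  assumes sym: "\<And>u v. u \<bullet> (H *v v) = v \<bullet> (H *v u)"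
    and t_pos: "0 < t"
    and t_bound: "lambda_max H \<noteq> 0 \<Longrightarrow> t < 1 / lambda_max H"
    and eq: "(mat 1 - t *\<^sub>R H) *v d = 0"
  shows "d = 0"
proof (rule ccontr)
  assume "d \<noteq> 0"
  have "d = t *\<^sub>R (H *v d)" using eq by (simp add: matrix_vector_mult_diff_rdistrib
     matrix_vector_mul_lid scaleR_matrix_vector_assoc)
  then have "(1/t) *\<^sub>R d = (1/t) *\<^sub>R (t *\<^sub>R (H *v d))" by simp
  then have "H *v d = (1/t) *\<^sub>R d" using t_pos by simp
  then have "1/t \<in> eigenvalues H" unfolding eigenvalues_def using \<open>d \<noteq> 0\<close> by blast
  then have le: "1/t \<le> lambda_max H" unfolding lambda_max_def using eig_finite[OF sym] by simp
  show False
  proof (cases "lambda_max H = 0")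
    case True then show ?thesis using le t_pos by simp
  next
    case False
    then have "t < 1 / lambda_max H" by (rule t_bound)
    moreover have "1/t > 0" using t_pos by simp
    then have "lambda_max H > 0" using le by linarith
    ultimately show ?thesis using le t_pos by (simp add: field_simps)
  qed
qed

lemma key_a:
  fixes H M :: "real^'n^'n"
  assumes psd: "\<And>d. 0 \<le> d \<bullet> (H *v d)"
    and sym: "\<And>u v. u \<bullet> (H *v v) = v \<bullet> (H *v u)"
    and Mp: "\<And>v. norm (M *v v)^2 \<le> (M *v v) \<bullet> v"
    and t_pos: "0 < t"
    and eq: "(mat 1 - M ** (mat 1 - t *\<^sub>R H)) *v d = 0"
  shows "(mat 1 - M) *v d = 0 \<and> d \<bullet> (H *v d) = 0"
proof -
  define y where "y = d - t *\<^sub>R (H *v d)"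
  have dy: "d = M *v y" using eq unfolding y_def
    by (simp add: matrix_vector_mult_diff_rdistrib matrix_vector_mul_assoc[symmetric]
         matrix_vector_mult_diff_distrib matrix_vector_mult_scaleR scaleR_matrix_vector_assoc[symmetric])
  have "d \<bullet> d = norm (M *v y)^2" using dy by (simp add: power2_norm_eq_inner)
  also have "\<dots> \<le> (M *v y) \<bullet> y" by (rule Mp)
  also have "\<dots> = d \<bullet> d - t * (d \<bullet> (H *v d))" using dy by (simp add: y_def inner_diff_right)
  finally have "t * (d \<bullet> (H *v d)) \<le> 0" by simp
  then have "d \<bullet> (H *v d) \<le> 0" using t_pos by (simp add: mult_le_0_iff)
  then have z: "d \<bullet> (H *v d) = 0" using psd[of d] by linarith
  then have "H *v d = 0" using psd_zero[OF psd sym] by blast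
  then have "y = d" by (simp add: y_def)
  then show ?thesis using dy z by (simp add: matrix_vector_mult_diff_rdistrib)
qed

lemma key_b:
  fixes H M :: "real^'n^'n"
  assumes psd: "\<And>d. 0 \<le> d \<bullet> (H *v d)"
    and sym: "\<And>u v. u \<bullet> (H *v v) = v \<bullet> (H *v u)"
    and Md: "(mat 1 - M) *v d = 0" and z: "\<not> 0 < d \<bullet> (H *v d)"
  shows "(mat 1 - M ** (mat 1 - t *\<^sub>R H)) *v d = 0"
proof -
  have "d \<bullet> (H *v d) = 0" using z psd[of d] by simp
  then have "H *v d = 0" using psd_zero[OF psd sym] by blast
  then show ?thesis using Md
    by (simp add: matrix_vector_mult_diff_rdistrib matrix_vector_mul_assoc[symmetric]
         matrix_vector_mult_diff_distrib matrix_vector_mult_scaleR scaleR_matrix_vector_assoc[symmetric])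
qed

lemma invertible_ker:
  fixes A :: "real^'n^'n"
  shows "invertible A \<longleftrightarrow> (\<forall>x. A *v x = 0 \<longrightarrow> x = 0)"
  by (simp add: invertible_left_inverse matrix_left_invertible_ker)



lemma mixed:
  fixes f :: "real^'n \<Rightarrow> real" and g :: "real^'n \<Rightarrow> real^'n"
  assumes grad: "\<And>y. (f has_derivative (\<lambda>v. g y \<bullet> v)) (at y)"
    and hess: "\<And>y. (g has_derivative (\<lambda>v. H y *v v)) (at y)"
    and s: "0 \<le> s"
  shows "\<exists>a b. 0 \<le> a \<and> a \<le> s \<and> 0 \<le> b \<and> b \<le> s \<and>
     f (x + s *\<^sub>R u + s *\<^sub>R v) - f (x + s *\<^sub>R u) - f (x + s *\<^sub>R v) + f x
       = s * s * ((H (x + a *\<^sub>R u + b *\<^sub>R v) *v v) \<bullet> u)"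
proof -
  define \<psi> where "\<psi> a = f (x + a *\<^sub>R u + s *\<^sub>R v) - f (x + a *\<^sub>R u)" for a
  have d\<psi>: "(\<psi> has_derivative (\<lambda>da. g (x + a *\<^sub>R u + s *\<^sub>R v) \<bullet> (da *\<^sub>R u) - g (x + a *\<^sub>R u) \<bullet> (da *\<^sub>R u)))
      (at a within {0..s})" for a
  proof -
    have l1: "((\<lambda>a. x + a *\<^sub>R u + s *\<^sub>R v) has_derivative (\<lambda>da. da *\<^sub>R u)) (at a within {0..s})"
      by (auto intro!: derivative_eq_intros)
    have l2: "((\<lambda>a. x + a *\<^sub>R u) has_derivative (\<lambda>da. da *\<^sub>R u)) (at a within {0..s})"
      by (auto intro!: derivative_eq_intros)
    show ?thesis unfolding \<psi>_def
      by (intro has_derivative_diff has_derivative_compose[OF l1 grad] has_derivative_compose[OF l2 grad])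
  qed
  obtain a where a: "a \<in> {0..s}" and "\<psi> s - \<psi> 0 = g (x + a *\<^sub>R u + s *\<^sub>R v) \<bullet> ((s - 0) *\<^sub>R u) - g (x + a *\<^sub>R u) \<bullet> ((s - 0) *\<^sub>R u)"
    using mvt_very_simple[OF s, of \<psi>, OF d\<psi>] by blast
  then have e1: "\<psi> s - \<psi> 0 = s * (g (x + a *\<^sub>R u + s *\<^sub>R v) \<bullet> u - g (x + a *\<^sub>R u) \<bullet> u)"
    by (simp add: algebra_simps)
  define chi where "chi b = g (x + a *\<^sub>R u + b *\<^sub>R v) \<bullet> u" for b
  have dchi: "(chi has_derivative (\<lambda>db. (H (x + a *\<^sub>R u + b *\<^sub>R v) *v (db *\<^sub>R v)) \<bullet> u))
      (at b within {0..s})" for b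
  proof -
    have l1: "((\<lambda>b. x + a *\<^sub>R u + b *\<^sub>R v) has_derivative (\<lambda>db. db *\<^sub>R v)) (at b within {0..s})"
      by (auto intro!: derivative_eq_intros)
    show ?thesis unfolding chi_def
      by (intro has_derivative_inner_left has_derivative_compose[OF l1 hess])
  qed
  obtain b where b: "b \<in> {0..s}" and "chi s - chi 0 = (H (x + a *\<^sub>R u + b *\<^sub>R v) *v ((s - 0) *\<^sub>R v)) \<bullet> u"
    using mvt_very_simple[OF s, of chi, OF dchi] by blast
  then have e2: "chi s - chi 0 = s * ((H (x + a *\<^sub>R u + b *\<^sub>R v) *v v) \<bullet> u)"
    by (simp add: matrix_vector_mult_scaleR)
  have "f (x + s *\<^sub>R u + s *\<^sub>R v) - f (x + s *\<^sub>R u) - f (x + s *\<^sub>R v) + f x = \<psi> s - \<psi> 0"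
    by (simp add: \<psi>_def add.commute add.left_commute)
  also have "\<dots> = s * (chi s - chi 0)" using e1 by (simp add: chi_def add.commute add.left_commute)
  also have "\<dots> = s * s * ((H (x + a *\<^sub>R u + b *\<^sub>R v) *v v) \<bullet> u)" using e2 by simp
  finally show ?thesis using a b by auto
qed

lemma hess_sym:
  fixes f :: "real^'n \<Rightarrow> real" and g :: "real^'n \<Rightarrow> real^'n"
  assumes grad: "\<And>y. (f has_derivative (\<lambda>v. g y \<bullet> v)) (at y)"
    and hess: "\<And>y. (g has_derivative (\<lambda>v. H y *v v)) (at y)"
    and cont: "continuous_on UNIV H"
  shows "u \<bullet> (H x *v v) = v \<bullet> (H x *v u)"
proof -
  define s where "s k = 1 / real (Suc k)" for k
  have s0: "0 \<le> s k" for k by (simp add: s_def)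
  have "\<exists>p q. norm (p - x) \<le> s k * (norm u + norm v) \<and> norm (q - x) \<le> s k * (norm u + norm v) \<and>
     (H p *v v) \<bullet> u = (H q *v u) \<bullet> v" for k
  proof -
    obtain a b where ab: "0 \<le> a" "a \<le> s k" "0 \<le> b" "b \<le> s k" and
      e1: "f (x + s k *\<^sub>R u + s k *\<^sub>R v) - f (x + s k *\<^sub>R u) - f (x + s k *\<^sub>R v) + f x
       = s k * s k * ((H (x + a *\<^sub>R u + b *\<^sub>R v) *v v) \<bullet> u)"
      using mixed[OF grad hess s0] by blast
    obtain a' b' where ab': "0 \<le> a'" "a' \<le> s k" "0 \<le> b'" "b' \<le> s k" and
      e2: "f (x + s k *\<^sub>R v + s k *\<^sub>R u) - f (x + s k *\<^sub>R v) - f (x + s k *\<^sub>R u) + f x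
       = s k * s k * ((H (x + a' *\<^sub>R v + b' *\<^sub>R u) *v u) \<bullet> v)"
      using mixed[OF grad hess s0] by blast
    have sp: "s k > 0" by (simp add: s_def)
    have "s k * s k * ((H (x + a *\<^sub>R u + b *\<^sub>R v) *v v) \<bullet> u) = s k * s k * ((H (x + a' *\<^sub>R v + b' *\<^sub>R u) *v u) \<bullet> v)"
    proof -
      have eqA: "x + s k *\<^sub>R v + s k *\<^sub>R u = x + s k *\<^sub>R u + s k *\<^sub>R v" by (simp add: algebra_simps)
      show ?thesis using e1 e2 unfolding eqA by linarith
    qed
    then have eq: "(H (x + a *\<^sub>R u + b *\<^sub>R v) *v v) \<bullet> u = (H (x + a' *\<^sub>R v + b' *\<^sub>R u) *v u) \<bullet> v"
      using sp by simp
    have n1: "norm ((x + a *\<^sub>R u + b *\<^sub>R v) - x) \<le> s k * (norm u + norm v)"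
    proof -
      have "(x + a *\<^sub>R u + b *\<^sub>R v) - x = a *\<^sub>R u + b *\<^sub>R v" by simp
      then have "norm ((x + a *\<^sub>R u + b *\<^sub>R v) - x) \<le> norm (a *\<^sub>R u) + norm (b *\<^sub>R v)"
        by (metis norm_triangle_ineq)
      also have "\<dots> \<le> s k * norm u + s k * norm v" using ab
        by (intro add_mono) (auto intro: mult_right_mono)
      finally show ?thesis by (simp add: algebra_simps)
    qed
    have n2: "norm ((x + a' *\<^sub>R v + b' *\<^sub>R u) - x) \<le> s k * (norm u + norm v)"
    proof -
      have "(x + a' *\<^sub>R v + b' *\<^sub>R u) - x = a' *\<^sub>R v + b' *\<^sub>R u" by simp
      then have "norm ((x + a' *\<^sub>R v + b' *\<^sub>R u) - x) \<le> norm (a' *\<^sub>R v) + norm (b' *\<^sub>R u)"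
        by (metis norm_triangle_ineq)
      also have "\<dots> \<le> s k * norm v + s k * norm u" using ab'
        by (intro add_mono) (auto intro: mult_right_mono)
      finally show ?thesis by (simp add: algebra_simps)
    qed
    show ?thesis using n1 n2 eq by blast
  qed
  then obtain p q where pq: "\<And>k. norm (p k - x) \<le> s k * (norm u + norm v)"
    "\<And>k. norm (q k - x) \<le> s k * (norm u + norm v)" "\<And>k. (H (p k) *v v) \<bullet> u = (H (q k) *v u) \<bullet> v"
    by metis
  have sl: "(\<lambda>k. s k * (norm u + norm v)) \<longlonglongrightarrow> 0"
    unfolding s_def using tendsto_mult_left_zero[OF LIMSEQ_inverse_real_of_nat]
    by (simp add: inverse_eq_divide)
  have conv: "r \<longlonglongrightarrow> x" if "\<And>k. norm (r k - x) \<le> s k * (norm u + norm v)" for r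
  proof -
    have "(\<lambda>k. r k - x) \<longlonglongrightarrow> 0"
      by (rule Lim_null_comparison[OF _ sl]) (use that in auto)
    then show ?thesis by (simp add: Lim_null[symmetric])
  qed
  have pl: "p \<longlonglongrightarrow> x" and ql: "q \<longlonglongrightarrow> x" using conv pq by auto
  have Hc: "isCont H x" using cont by (simp add: continuous_on_eq_continuous_at)
  have l1: "(\<lambda>k. (H (p k) *v v) \<bullet> u) \<longlonglongrightarrow> (H x *v v) \<bullet> u"
    by (intro tendsto_inner tendsto_const tendsto_mvec isCont_tendsto_compose[OF Hc pl])
  have l2: "(\<lambda>k. (H (q k) *v u) \<bullet> v) \<longlonglongrightarrow> (H x *v u) \<bullet> v"
    by (intro tendsto_inner tendsto_const tendsto_mvec isCont_tendsto_compose[OF Hc ql])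
  have "(H x *v v) \<bullet> u = (H x *v u) \<bullet> v"
    using LIMSEQ_unique[OF l1 l2[folded pq(3)]] .
  then show ?thesis by (simp add: inner_commute)
qed


lemma norm_add_sq:
  fixes u v :: "'a::real_inner"
  shows "norm (u + v)^2 = norm u^2 + 2 * (u \<bullet> v) + norm v^2"
  by (simp add: power2_norm_eq_inner inner_add_left inner_add_right inner_commute)

lemma minorant:
  fixes h :: "'a::euclidean_space \<Rightarrow> ereal"
  assumes pr: "proper_fun h" and cl: "closed_fun h" and cv: "convex_fun h"
  shows "\<exists>a b. \<forall>z. ereal (a \<bullet> z + b) \<le> h z"
proof -
  obtain y0 where "h y0 \<noteq> \<infinity>" using pr unfolding proper_fun_def by auto
  moreover have "h y0 \<noteq> -\<infinity>" using pr unfolding proper_fun_def by auto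
  ultimately obtain r0 where r0: "h y0 = ereal r0" by (cases "h y0") auto
  have nin: "(y0, r0 - 1) \<notin> epigraph h" using r0 by (simp add: epigraph_def)
  obtain c \<beta> where c1: "c \<bullet> (y0, r0 - 1) < \<beta>" and c2: "\<forall>w\<in>epigraph h. \<beta> < c \<bullet> w"
    using separating_hyperplane_closed_point[OF cv[unfolded convex_fun_def] cl[unfolded closed_fun_def] nin]
    by blast
  obtain c1 \<alpha> where c: "c = (c1, \<alpha>)" by (cases c)
  have in0: "(y0, r0) \<in> epigraph h" using r0 by (simp add: epigraph_def)
  have "\<beta> < c1 \<bullet> y0 + \<alpha> * r0" using c2 in0 c by (auto simp: inner_Pair)
  moreover have "c1 \<bullet> y0 + \<alpha> * (r0 - 1) < \<beta>" using c1 c by (simp add: inner_Pair)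
  ultimately have apos: "\<alpha> > 0" by (simp add: algebra_simps)
  have "ereal ((- (1/\<alpha>) *\<^sub>R c1) \<bullet> z + \<beta>/\<alpha>) \<le> h z" for z
  proof (cases "h z")
    case (real r)
    then have "(z, r) \<in> epigraph h" by (simp add: epigraph_def)
    then have "\<beta> < c1 \<bullet> z + \<alpha> * r" using c2 c by (auto simp: inner_Pair)
    then have "(- (1/\<alpha>) *\<^sub>R c1) \<bullet> z + \<beta>/\<alpha> \<le> r" using apos
      by (simp add: field_simps)
    then show ?thesis using real by simp
  next
    case PInf then show ?thesis by simp
  next
    case MInf then show ?thesis using pr unfolding proper_fun_def by auto
  qed
  then show ?thesis by blast
qed

definition obj :: "real \<Rightarrow> ('a::real_normed_vector \<Rightarrow> ereal) \<Rightarrow> 'a \<Rightarrow> 'a \<Rightarrow> ereal" where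
  "obj t h y z = h z + ereal (norm (z - y)^2 / (2 * t))"

lemma prox_exists:
  fixes h :: "'a::euclidean_space \<Rightarrow> ereal"
  assumes pr: "proper_fun h" and cl: "closed_fun h" and cv: "convex_fun h" and t: "0 < t"
  shows "\<exists>p. \<forall>z. obj t h y p \<le> obj t h y z"
proof -
  obtain a b where ab: "\<And>z. ereal (a \<bullet> z + b) \<le> h z" using minorant[OF pr cl cv] by blast
  obtain y0 where "h y0 \<noteq> \<infinity>" using pr unfolding proper_fun_def by auto
  moreover have "h y0 \<noteq> -\<infinity>" using pr unfolding proper_fun_def by auto
  ultimately obtain r0 where r0: "h y0 = ereal r0" by (cases "h y0") auto
  define \<Phi> where "\<Phi> w = snd w + norm (fst w - y)^2 / (2 * t)" for w :: "'a \<times> real"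
  define c where "c = \<Phi> (y0, r0)"
  define K where "K = epigraph h \<inter> {w. \<Phi> w \<le> c}"
  have contPhi: "continuous_on UNIV \<Phi>" unfolding \<Phi>_def using t by (intro continuous_intros) auto
  have "closed K" unfolding K_def
    using cl[unfolded closed_fun_def] contPhi
    by (intro closed_Int closed_Collect_le) (auto intro: continuous_intros)
  define \<rho> where "\<rho> = 2 * t * (c - b) + t^2 * norm a ^ 2 - 2 * t * (a \<bullet> y)"
  define R0 where "R0 = norm (y - t *\<^sub>R a) + sqrt \<rho>"
  have Ksub: "K \<subseteq> cball (y - t *\<^sub>R a) (sqrt \<rho>) \<times> {b - norm a * R0 .. c}"
  proof
    fix w assume w: "w \<in> K"
    obtain z r where wz: "w = (z, r)" by (cases w)
    have hz: "h z \<le> ereal r" and Pc: "r + norm (z - y)^2 / (2 * t) \<le> c"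
      using w wz by (auto simp: K_def epigraph_def \<Phi>_def)
    have r1: "a \<bullet> z + b \<le> r" using order_trans[OF ab hz] by simp
    have sq: "norm (z - (y - t *\<^sub>R a))^2 = norm (z - y)^2 + 2 * t * (a \<bullet> (z - y)) + t^2 * norm a ^ 2"
    proof -
      have e: "z - (y - t *\<^sub>R a) = (z - y) + t *\<^sub>R a" by simp
      have "norm ((z - y) + t *\<^sub>R a)^2 = norm (z - y)^2 + 2 * t * (a \<bullet> (z - y)) + t^2 * norm a ^ 2"
        unfolding norm_add_sq by (simp add: inner_commute power_mult_distrib)
      then show ?thesis unfolding e .
    qed
    have "norm (z - y)^2 \<le> 2 * t * (c - r)" using Pc t by (simp add: field_simps)
    moreover have "t * (c - r) \<le> t * (c - b - a \<bullet> z)" using r1 t by (intro mult_left_mono) auto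
    moreover have "a \<bullet> (z - y) = a \<bullet> z - a \<bullet> y" by (simp add: inner_diff_right)
    ultimately have "norm (z - (y - t *\<^sub>R a))^2 \<le> \<rho>" unfolding sq \<rho>_def
      by (simp add: algebra_simps)
    then have d: "norm (z - (y - t *\<^sub>R a)) \<le> sqrt \<rho>" by (simp add: real_le_rsqrt)
    then have "dist (y - t *\<^sub>R a) z \<le> sqrt \<rho>" by (simp add: dist_norm norm_minus_commute)
    moreover have "norm z \<le> R0" unfolding R0_def using d norm_triangle_sub[of z "y - t *\<^sub>R a"]
      by (metis add.commute add_left_mono norm_triangle_ineq order_trans  diff_add_cancel)
    then have "b - norm a * R0 \<le> r"
      using r1 norm_cauchy_schwarz[of a z] mult_left_mono[OF \<open>norm z \<le> R0\<close> norm_ge_zero[of a]]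
      by (smt (verit) inner_minus_left norm_cauchy_schwarz norm_minus_cancel)
    moreover have "r \<le> c" using Pc t by (smt (verit) divide_nonneg_pos zero_le_power2)
    ultimately show "w \<in> cball (y - t *\<^sub>R a) (sqrt \<rho>) \<times> {b - norm a * R0 .. c}" using wz by auto
  qed
  have "bounded K" by (rule bounded_subset[OF bounded_Times[OF bounded_cball bounded_closed_interval] Ksub])
  then have "compact K" using \<open>closed K\<close> by (simp add: compact_eq_bounded_closed)
  moreover have "(y0, r0) \<in> K" using r0 by (simp add: K_def epigraph_def c_def)
  ultimately obtain w where wK: "w \<in> K" and wmin: "\<And>w'. w' \<in> K \<Longrightarrow> \<Phi> w \<le> \<Phi> w'"
    using continuous_attains_inf[of K \<Phi>] continuous_on_subset[OF contPhi] by blast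
  obtain p rp where wp: "w = (p, rp)" by (cases w)
  have hp: "h p \<le> ereal rp" and Pw: "\<Phi> w \<le> c" using wK wp by (auto simp: K_def epigraph_def)
  have op: "obj t h y p \<le> ereal (\<Phi> w)"
    using hp wp unfolding obj_def \<Phi>_def by (metis add_right_mono fst_conv plus_ereal.simps(1) snd_conv)
  have "obj t h y p \<le> obj t h y z" for z
  proof (cases "h z")
    case (real r)
    then have e: "(z, r) \<in> epigraph h" by (simp add: epigraph_def)
    have oz: "obj t h y z = ereal (\<Phi> (z, r))" using real by (simp add: obj_def \<Phi>_def)
    show ?thesis
    proof (cases "\<Phi> (z, r) \<le> c")
      case True
      then have "(z, r) \<in> K" using e by (simp add: K_def)
      then show ?thesis using op oz wmin by (metis ereal_less_eq(3) order_trans)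
    next
      case False
      then show ?thesis using op oz Pw by (metis ereal_less_eq(3) order_trans linorder_le_cases)
    qed
  next
    case PInf then show ?thesis by (simp add: obj_def)
  next
    case MInf then show ?thesis using pr unfolding proper_fun_def by auto
  qed
  then show ?thesis by blast
qed



lemma aux_sum:
  fixes hp hq x y w z :: real
  shows "hp \<le> hq + x + w \<Longrightarrow> hq \<le> hp + y + w \<Longrightarrow> w + w = z \<Longrightarrow> 0 \<le> x + y + z"
  by linarith

lemma obj_fin:
  fixes h :: "'a::euclidean_space \<Rightarrow> ereal"
  assumes pr: "proper_fun h" and m: "\<forall>z. obj t h y p \<le> obj t h y z"
  shows "\<exists>hp. h p = ereal hp"
proof -
  obtain y0 where "h y0 \<noteq> \<infinity>" using pr unfolding proper_fun_def by auto
  moreover have "h y0 \<noteq> -\<infinity>" using pr unfolding proper_fun_def by auto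
  ultimately obtain r0 where r0: "h y0 = ereal r0" by (cases "h y0") auto
  have "obj t h y p \<le> ereal (r0 + norm (y0 - y)^2 / (2 * t))" using m r0 by (metis obj_def plus_ereal.simps(1))
  then have "h p \<noteq> \<infinity>" by (auto simp: obj_def)
  moreover have "h p \<noteq> -\<infinity>" using pr unfolding proper_fun_def by auto
  ultimately show ?thesis by (cases "h p") auto
qed

lemma convex_comb:
  fixes h :: "'a::euclidean_space \<Rightarrow> ereal"
  assumes cv: "convex_fun h" and p: "h p = ereal hp" and q: "h q = ereal hq" and s: "0 \<le> s" "s \<le> 1"
  shows "h ((1 - s) *\<^sub>R p + s *\<^sub>R q) \<le> ereal ((1 - s) * hp + s * hq)"
proof -
  have "(p, hp) \<in> epigraph h" "(q, hq) \<in> epigraph h" using p q by (auto simp: epigraph_def)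
  then have "(1 - s) *\<^sub>R (p, hp) + s *\<^sub>R (q, hq) \<in> epigraph h"
    using s by (intro convexD[OF cv[unfolded convex_fun_def]]) auto
  then show ?thesis by (simp add: epigraph_def)
qed

lemma prox_unique:
  fixes h :: "'a::euclidean_space \<Rightarrow> ereal"
  assumes pr: "proper_fun h" and cv: "convex_fun h" and t: "0 < t"
    and mp: "\<forall>z. obj t h y p \<le> obj t h y z" and mq: "\<forall>z. obj t h y q \<le> obj t h y z"
  shows "p = q"
proof -
  obtain hp hq where hp: "h p = ereal hp" and hq: "h q = ereal hq" using obj_fin[OF pr] mp mq by metis
  define m where "m = (1 - 1/2) *\<^sub>R p + (1/2) *\<^sub>R q"
  have hm: "h m \<le> ereal ((1 - 1/2) * hp + (1/2) * hq)" unfolding m_def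
    by (rule convex_comb[OF cv hp hq]) auto
  define Vp where "Vp = hp + norm (p - y)^2 / (2 * t)"
  define Vq where "Vq = hq + norm (q - y)^2 / (2 * t)"
  have op: "obj t h y p = ereal Vp" and oq: "obj t h y q = ereal Vq" by (simp_all add: obj_def hp hq Vp_def Vq_def)
  have "Vp \<le> Vq" "Vq \<le> Vp" using mp mq op oq by (metis ereal_less_eq(3))+
  have par: "norm (m - y)^2 = (norm (p - y)^2 + norm (q - y)^2) / 2 - norm (p - q)^2 / 4"
  proof -
    have hh: "(1/2) *\<^sub>R y + (1/2) *\<^sub>R y = y" by (metis field_sum_of_halves scaleR_add_left scaleR_one)
    have e1: "m - y = (1/2) *\<^sub>R ((p - y) + (q - y))" using hh by (simp add: m_def algebra_simps)
    have e2: "p - q = (p - y) + (- (q - y))" by simp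
    show ?thesis unfolding e1 e2 norm_add_sq
      by (simp add: power_mult_distrib inner_add_left inner_add_right inner_commute power2_norm_eq_inner algebra_simps)
         (simp add: field_simps)
  qed
  have "obj t h y m \<le> ereal ((1 - 1/2) * hp + (1/2) * hq + norm (m - y)^2 / (2 * t))"
    using hm unfolding obj_def by (metis add_right_mono plus_ereal.simps(1))
  moreover have "obj t h y p \<le> obj t h y m" using mp by blast
  ultimately have "obj t h y p \<le> ereal ((1 - 1/2) * hp + (1/2) * hq + norm (m - y)^2 / (2 * t))"
    by (rule order_trans[rotated])
  then have "Vp \<le> (1 - 1/2) * hp + (1/2) * hq + norm (m - y)^2 / (2 * t)" unfolding op by simp
  moreover have "(1 - 1/2) * hp + (1/2) * hq + norm (m - y)^2 / (2 * t) = (Vp + Vq)/2 - norm (p - q)^2 / (8 * t)"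
    unfolding par Vp_def Vq_def using t by (simp add: field_simps)
  ultimately have "Vp \<le> (Vp + Vq)/2 - norm (p - q)^2 / (8 * t)" by linarith
  then have "norm (p - q)^2 / (8 * t) \<le> 0" using \<open>Vp \<le> Vq\<close> \<open>Vq \<le> Vp\<close> by simp
  then have "norm (p - q)^2 \<le> 0" using t by (simp add: divide_le_0_iff)
  then show ?thesis by simp
qed

lemma prox_char:
  fixes h :: "'a::euclidean_space \<Rightarrow> ereal"
  assumes pr: "proper_fun h" and cl: "closed_fun h" and cv: "convex_fun h" and t: "0 < t"
  shows "\<forall>z. obj t h y (prox t h y) \<le> obj t h y z"
proof -
  have ex: "\<exists>!p. \<forall>z. obj t h y p \<le> obj t h y z"
    using prox_exists[OF pr cl cv t] prox_unique[OF pr cv t] by blast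
  show ?thesis unfolding prox_def obj_def[symmetric] by (rule theI'[OF ex])
qed

lemma vi:
  fixes h :: "'a::euclidean_space \<Rightarrow> ereal"
  assumes cv: "convex_fun h" and t: "0 < t"
    and mp: "\<forall>z. obj t h a p \<le> obj t h a z"
    and hp: "h p = ereal hp" and hq: "h q = ereal hq" and s: "0 < s" "s \<le> 1"
  shows "hp \<le> hq + ((q - p) \<bullet> (p - a)) / t + s * norm (q - p)^2 / (2 * t)"
proof -
  define z where "z = (1 - s) *\<^sub>R p + s *\<^sub>R q"
  have hz: "h z \<le> ereal ((1 - s) * hp + s * hq)" unfolding z_def
    by (rule convex_comb[OF cv hp hq]) (use s in auto)
  have "obj t h a z \<le> ereal ((1 - s) * hp + s * hq + norm (z - a)^2 / (2 * t))"
    using hz unfolding obj_def by (metis add_right_mono plus_ereal.simps(1))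
  moreover have "obj t h a p \<le> obj t h a z" using mp by blast
  ultimately have "obj t h a p \<le> ereal ((1 - s) * hp + s * hq + norm (z - a)^2 / (2 * t))" by simp
  then have I: "hp + norm (p - a)^2 / (2 * t) \<le> (1 - s) * hp + s * hq + norm (z - a)^2 / (2 * t)"
    using hp by (simp add: obj_def)
  have za: "z - a = (p - a) + s *\<^sub>R (q - p)" by (simp add: z_def algebra_simps)
  have nz: "norm (z - a)^2 = norm (p - a)^2 + 2 * s * ((q - p) \<bullet> (p - a)) + s^2 * norm (q - p)^2"
    unfolding za norm_add_sq by (simp add: inner_commute power_mult_distrib)
  have "s * hp \<le> s * (hq + ((q - p) \<bullet> (p - a)) / t + s * norm (q - p)^2 / (2 * t))"
    using I t unfolding nz by (simp add: field_simps power2_eq_square)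
  then show ?thesis using s by simp
qed

lemma fne:
  fixes h :: "'a::euclidean_space \<Rightarrow> ereal"
  assumes pr: "proper_fun h" and cl: "closed_fun h" and cv: "convex_fun h" and t: "0 < t"
  shows "norm (prox t h a - prox t h b)^2 \<le> (prox t h a - prox t h b) \<bullet> (a - b)"
proof -
  define p where "p = prox t h a"
  define q where "q = prox t h b"
  have mp: "\<forall>z. obj t h a p \<le> obj t h a z" and mq: "\<forall>z. obj t h b q \<le> obj t h b z"
    unfolding p_def q_def using prox_char[OF pr cl cv t] by auto
  obtain hp hq where hp: "h p = ereal hp" and hq: "h q = ereal hq" using obj_fin[OF pr] mp mq by metis
  define D where "D = norm (p - q)^2"
  define X where "X = (p - q) \<bullet> (a - b)"
  have key: "D - X \<le> s * D" if s: "0 < s" "s \<le> 1" for s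
  proof -
    have 1: "hp \<le> hq + ((q - p) \<bullet> (p - a)) / t + s * norm (q - p)^2 / (2 * t)"
      by (rule vi[OF cv t mp hp hq s])
    have 2: "hq \<le> hp + ((p - q) \<bullet> (q - b)) / t + s * norm (p - q)^2 / (2 * t)"
      by (rule vi[OF cv t mq hq hp s])
    have e: "(q - p) \<bullet> (p - a) + (p - q) \<bullet> (q - b) = X - D"
      unfolding X_def D_def power2_norm_eq_inner
      by (simp add: inner_diff_left inner_diff_right inner_commute algebra_simps)
    have nc: "norm (q - p) = norm (p - q)" by (rule norm_minus_commute)
    have "0 \<le> ((q - p) \<bullet> (p - a) + (p - q) \<bullet> (q - b)) / t + s * D / t"
    proof -
      have "s * D / (2 * t) + s * D / (2 * t) = s * D / t" using t by (simp add: field_simps)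
      then show ?thesis using aux_sum[OF 1[unfolded nc] 2] unfolding D_def add_divide_distrib by simp
    qed
    then have "0 \<le> (X - D + s * D) / t" unfolding e by (simp add: add_divide_distrib)
    then show ?thesis using t by (simp add: divide_nonneg_pos zero_le_divide_iff)
  qed
  have "D \<le> X"
  proof (rule ccontr)
    assume "\<not> D \<le> X"
    then have Dp: "D - X > 0" by simp
    have "D - X \<le> 1 * D" using key[of 1] by simp
    then have D0: "D > 0" using Dp by simp
    define s where "s = (D - X) / (2 * D)"
    have "s > 0" "s \<le> 1" using Dp D0 \<open>D - X \<le> 1 * D\<close> by (auto simp: s_def field_simps)
    then have "D - X \<le> s * D" by (rule key)
    also have "\<dots> = (D - X) / 2" using D0 by (simp add: s_def)
    finally show False using Dp by simp
  qed
  then show ?thesis unfolding D_def X_def p_def q_def .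
qed



lemma ev_ne0: "eventually (\<lambda>e::real. e \<noteq> 0) (at 0)"
  by (simp add: eventually_at_filter)

lemma jac_fne:
  fixes P :: "real^'n \<Rightarrow> real^'n"
  assumes fne: "\<And>a b. norm (P a - P b)^2 \<le> (P a - P b) \<bullet> (a - b)"
    and d: "(P has_derivative (\<lambda>v. J *v v)) (at z)"
  shows "norm (J *v v)^2 \<le> (J *v v) \<bullet> v"
proof -
  define w where "w = J *v v"
  define g1 where "g1 e = P (z + e *\<^sub>R v)" for e :: real
  have l: "((\<lambda>e::real. z + e *\<^sub>R v) has_derivative (\<lambda>e. e *\<^sub>R v)) (at 0)"
    by (auto intro!: derivative_eq_intros)
  have dg: "(g1 has_derivative (\<lambda>e. e *\<^sub>R w)) (at 0)"
  proof -
    have "(g1 has_derivative (\<lambda>e. J *v (e *\<^sub>R v))) (at 0)"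
      unfolding g1_def using has_derivative_compose[OF l, of P] d by simp
    then show ?thesis by (simp add: w_def matrix_vector_mult_scaleR)
  qed
  then have "((\<lambda>e. (g1 e - g1 0 - (e - 0) *\<^sub>R w) /\<^sub>R norm (e - 0)) \<longlongrightarrow> 0) (at 0)"
    by (simp add: has_derivative_at_within)
  then have "((\<lambda>e. (g1 e - g1 0 - e *\<^sub>R w) /\<^sub>R norm e) \<longlongrightarrow> 0) (at (0::real))"
    by simp
  note tendsto_norm_zero[OF this]
  moreover have "\<forall>\<^sub>F e in at 0. norm ((g1 e - g1 0 - e *\<^sub>R w) /\<^sub>R norm e) = norm ((g1 e - g1 0) /\<^sub>R e - w)"
  proof (rule eventually_mono[OF ev_ne0])
    fix e :: real assume e: "e \<noteq> 0"
    have "(g1 e - g1 0) /\<^sub>R e - w = (g1 e - g1 0 - e *\<^sub>R w) /\<^sub>R e" using e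
      by (simp add: scaleR_diff_right)
    then show "norm ((g1 e - g1 0 - e *\<^sub>R w) /\<^sub>R norm e) = norm ((g1 e - g1 0) /\<^sub>R e - w)"
      by simp
  qed
  ultimately have "((\<lambda>e. norm ((g1 e - g1 0) /\<^sub>R e - w)) \<longlongrightarrow> 0) (at (0::real))"
    using tendsto_cong by fastforce
  then have R: "((\<lambda>e. (g1 e - g1 0) /\<^sub>R e) \<longlongrightarrow> w) (at (0::real))"
    by (simp add: tendsto_norm_zero_iff Lim_null[symmetric])
  have L1: "((\<lambda>e. norm ((g1 e - g1 0) /\<^sub>R e)^2) \<longlongrightarrow> norm w ^2) (at (0::real))"
    by (intro tendsto_intros R)
  have L2: "((\<lambda>e. ((g1 e - g1 0) /\<^sub>R e) \<bullet> v) \<longlongrightarrow> w \<bullet> v) (at (0::real))"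
    by (intro tendsto_intros R)
  have "\<forall>\<^sub>F e in at 0. norm ((g1 e - g1 0) /\<^sub>R e)^2 \<le> ((g1 e - g1 0) /\<^sub>R e) \<bullet> v"
  proof (rule eventually_mono[OF ev_ne0])
    fix e :: real assume e: "e \<noteq> 0"
    have "norm (g1 e - g1 0)^2 \<le> (g1 e - g1 0) \<bullet> (e *\<^sub>R v)"
      using fne[of "z + e *\<^sub>R v" z] by (simp add: g1_def)
    then have "norm (g1 e - g1 0)^2 / (e * e) \<le> ((g1 e - g1 0) \<bullet> (e *\<^sub>R v)) / (e * e)"
      by (intro divide_right_mono) simp_all
    moreover have "norm ((g1 e - g1 0) /\<^sub>R e)^2 = norm (g1 e - g1 0)^2 / (e * e)"
    proof -
      have "norm ((g1 e - g1 0) /\<^sub>R e) = norm (g1 e - g1 0) / \<bar>e\<bar>"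
        by (simp add: divide_inverse abs_inverse mult.commute)
      then have "norm ((g1 e - g1 0) /\<^sub>R e)^2 = norm (g1 e - g1 0)^2 / \<bar>e\<bar>^2"
        by (simp add: power_divide)
      then show ?thesis by (simp add: power2_eq_square)
    qed
    moreover have "((g1 e - g1 0) /\<^sub>R e) \<bullet> v = ((g1 e - g1 0) \<bullet> (e *\<^sub>R v)) / (e * e)"
      using e by (simp add: divide_inverse mult.commute)
    ultimately show "norm ((g1 e - g1 0) /\<^sub>R e)^2 \<le> ((g1 e - g1 0) /\<^sub>R e) \<bullet> v"
      by simp
  qed
  then have "norm w ^2 \<le> w \<bullet> v"
    by (rule tendsto_le[OF trivial_limit_at L2 L1])
  then show ?thesis by (simp add: w_def)
qed

lemma bjac_fne:
  fixes P :: "real^'n \<Rightarrow> real^'n"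
  assumes fne: "\<And>a b. norm (P a - P b)^2 \<le> (P a - P b) \<bullet> (a - b)"
    and M: "M \<in> bjac P z"
  shows "norm (M *v v)^2 \<le> (M *v v) \<bullet> v"
proof -
  obtain s J where d: "\<And>k. (P has_derivative (\<lambda>v. J k *v v)) (at (s k))" and JM: "J \<longlonglongrightarrow> M"
    using M unfolding bjac_def by blast
  have L: "(\<lambda>k. J k *v v) \<longlonglongrightarrow> M *v v" by (rule tendsto_mvec[OF JM])
  have "\<forall>\<^sub>F k in sequentially. norm (J k *v v)^2 \<le> (J k *v v) \<bullet> v"
    using jac_fne[OF fne d] by simp
  then show ?thesis
    by (rule tendsto_le[OF trivial_limit_sequentially tendsto_inner[OF L tendsto_const] tendsto_power[OF tendsto_norm[OF L]]])
qed

lemma fne_bound: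
  fixes M :: "real^'n^'n"
  assumes "\<And>v. norm (M *v v)^2 \<le> (M *v v) \<bullet> v"
  shows "norm (M *v v) \<le> norm v"
proof -
  have "norm (M *v v)^2 \<le> norm (M *v v) * norm v"
    using assms[of v] norm_cauchy_schwarz[of "M *v v" v] by linarith
  then show ?thesis
    by (metis mult_le_cancel_left norm_ge_zero not_le power2_eq_square mult_zero_left order.trans nle_le)
qed



lemma cont_mvec:
  fixes X :: "'a::topological_space \<Rightarrow> real^'n^'m"
  assumes "continuous_on S X"
  shows "continuous_on S (\<lambda>y. X y *v v)"
  using assms unfolding continuous_on_def by (auto intro: tendsto_mvec)

lemma phi_deriv:
  fixes g :: "real^'n \<Rightarrow> real^'n"
  assumes hess: "\<And>y. (g has_derivative (\<lambda>v. H y *v v)) (at y)"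
  shows "((\<lambda>y. y - t *\<^sub>R g y) has_derivative (\<lambda>v. (mat 1 - t *\<^sub>R H y) *v v)) (at y)"
proof -
  have "((\<lambda>y. y - t *\<^sub>R g y) has_derivative (\<lambda>v. v - t *\<^sub>R (H y *v v))) (at y)"
    by (intro has_derivative_diff has_derivative_ident has_derivative_scaleR_right hess)
  moreover have "(\<lambda>v. v - t *\<^sub>R (H y *v v)) = (\<lambda>v. (mat 1 - t *\<^sub>R H y) *v v)"
    by (simp add: matrix_vector_mult_diff_rdistrib scaleR_matrix_vector_assoc)
  ultimately show ?thesis by simp
qed

lemma ift:
  fixes g :: "real^'n \<Rightarrow> real^'n"
  assumes hess: "\<And>y. (g has_derivative (\<lambda>v. H y *v v)) (at y)"
    and cont: "continuous_on UNIV H"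
    and inj: "\<And>d. (mat 1 - t *\<^sub>R H x) *v d = 0 \<Longrightarrow> d = 0"
  obtains U V \<psi> \<psi>' where "open U" "x \<in> U" "open V" "x - t *\<^sub>R g x \<in> V"
    "homeomorphism U V (\<lambda>y. y - t *\<^sub>R g y) \<psi>"
    "\<And>z. z \<in> V \<Longrightarrow> (\<psi> has_derivative \<psi>' z) (at z)"
proof -
  define A where "A y = mat 1 - t *\<^sub>R H y" for y
  define f' where "f' y = Blinfun (\<lambda>v. A y *v v)" for y
  have ap: "blinfun_apply (f' y) = (\<lambda>v. A y *v v)" for y
    unfolding f'_def by (rule bounded_linear_Blinfun_apply) simp
  obtain B where B: "B ** A x = mat 1"
    using inj unfolding A_def by (metis matrix_left_invertible_ker)
  define invf where "invf = Blinfun (\<lambda>v. B *v v)"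
  have api: "blinfun_apply invf = (\<lambda>v. B *v v)"
    unfolding invf_def by (rule bounded_linear_Blinfun_apply) simp
  have derf: "((\<lambda>y. y - t *\<^sub>R g y) has_derivative blinfun_apply (f' y)) (at y)" for y
    unfolding ap A_def by (rule phi_deriv[OF hess])
  have contA: "continuous_on UNIV A" unfolding A_def
    by (intro continuous_intros cont)
  have contf: "continuous_on UNIV f'"
    by (rule continuous_on_blinfun_componentwise) (simp add: ap cont_mvec[OF contA])
  have invf: "invf o\<^sub>L f' x = id_blinfun"
    by (rule blinfun_eqI) (simp add: ap api matrix_vector_mul_assoc B)
  show ?thesis
  proof (rule inverse_function_theorem[OF open_UNIV derf contf UNIV_I invf])
    fix U' V g1 g'
    assume o: "open U'" "U' \<subseteq> UNIV" "x \<in> U'" "open V" "x - t *\<^sub>R g x \<in> V"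
      "homeomorphism U' V (\<lambda>y. y - t *\<^sub>R g y) g1"
      "\<And>y. y \<in> V \<Longrightarrow> (g1 has_derivative (g' y)) (at y)"
    show ?thesis by (rule that[OF o(1) o(3) o(4) o(5) o(6) o(7)])
  qed
qed



lemma mat_bound:
  fixes M :: "real^'n^'m"
  assumes b: "\<And>v. norm (M *v v) \<le> norm v"
  shows "norm M \<le> real CARD('m) * real CARD('n)"
proof -
  have e: "\<bar>M $ i $ j\<bar> \<le> 1" for i j
  proof -
    have "M $ i $ j = (M *v axis j 1) $ i"
      by (simp add: matrix_vector_mult_basis column_def)
    then have "\<bar>M $ i $ j\<bar> \<le> norm (M *v axis j 1)" using component_le_norm_cart by metis
    also have "\<dots> \<le> 1" using b[of "axis j 1"] by (simp add: norm_axis_1)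
    finally show ?thesis .
  qed
  have "norm M \<le> (\<Sum>i\<in>UNIV. norm (M $ i))"
    unfolding norm_vec_def by (rule L2_set_le_sum) simp
  also have "\<dots> \<le> (\<Sum>i\<in>(UNIV::'m set). (\<Sum>j\<in>(UNIV::'n set). 1))"
  proof (rule sum_mono)
    fix i
    have "norm (M $ i) \<le> (\<Sum>j\<in>UNIV. \<bar>M $ i $ j\<bar>)" by (rule norm_le_l1_cart)
    also have "\<dots> \<le> (\<Sum>j\<in>(UNIV::'n set). 1)" by (rule sum_mono) (rule e)
    finally show "norm (M $ i) \<le> (\<Sum>j\<in>(UNIV::'n set). 1)" .
  qed
  also have "\<dots> = real CARD('m) * real CARD('n)" by simp
  finally show ?thesis .
qed

lemma G1:
  fixes g :: "real^'n \<Rightarrow> real^'n" and P :: "real^'n \<Rightarrow> real^'n"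
  assumes hess: "\<And>y. (g has_derivative (\<lambda>v. H y *v v)) (at y)"
    and cont: "continuous_on UNIV H"
    and oV: "open V" and xU: "x \<in> U" and xV: "x - t *\<^sub>R g x \<in> V"
    and hom: "homeomorphism U V (\<lambda>y. y - t *\<^sub>R g y) \<psi>"
    and M: "M \<in> bjac P (x - t *\<^sub>R g x)"
  shows "mat 1 - M ** (mat 1 - t *\<^sub>R H x) \<in> bjac (\<lambda>y. y - P (y - t *\<^sub>R g y)) x"
proof -
  define A where "A y = mat 1 - t *\<^sub>R H y" for y
  obtain s J where d: "\<And>k. (P has_derivative (\<lambda>v. J k *v v)) (at (s k))"
    and sl: "s \<longlonglongrightarrow> x - t *\<^sub>R g x" and JM: "J \<longlonglongrightarrow> M"
    using M unfolding bjac_def by blast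
  have "eventually (\<lambda>k. s k \<in> V) sequentially" by (rule topological_tendstoD[OF sl oV xV])
  then obtain N0 where N0: "\<And>k. k \<ge> N0 \<Longrightarrow> s k \<in> V" by (auto simp: eventually_sequentially)
  have h1: "\<And>y. y \<in> V \<Longrightarrow> \<psi> y - t *\<^sub>R g (\<psi> y) = y" and h2: "\<psi> (x - t *\<^sub>R g x) = x"
    and h3: "continuous_on V \<psi>"
    using hom xU unfolding homeomorphism_def by auto
  define s' where "s' k = \<psi> (s (k + N0))" for k
  define J' where "J' k = mat 1 - J (k + N0) ** A (s' k)" for k
  have der: "((\<lambda>y. y - P (y - t *\<^sub>R g y)) has_derivative (\<lambda>v. J' k *v v)) (at (s' k))" for k
  proof -
    have sv: "s (k + N0) \<in> V" using N0 by simp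
    have e: "s' k - t *\<^sub>R g (s' k) = s (k + N0)" unfolding s'_def using h1[OF sv] .
    have d': "(P has_derivative (\<lambda>v. J (k + N0) *v v)) (at (s' k - t *\<^sub>R g (s' k)))"
      unfolding e by (rule d)
    have "((\<lambda>y. y - P (y - t *\<^sub>R g y)) has_derivative
        (\<lambda>v. v - J (k + N0) *v ((mat 1 - t *\<^sub>R H (s' k)) *v v))) (at (s' k))"
      by (rule has_derivative_diff[OF has_derivative_ident has_derivative_compose[OF phi_deriv[OF hess] d']])
    moreover have "(\<lambda>v. v - J (k + N0) *v ((mat 1 - t *\<^sub>R H (s' k)) *v v)) = (\<lambda>v. J' k *v v)"
      by (simp add: J'_def A_def matrix_vector_mult_diff_rdistrib matrix_vector_mul_assoc[symmetric])
    ultimately show ?thesis by simp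
  qed
  have sl': "(\<lambda>k. s (k + N0)) \<longlonglongrightarrow> x - t *\<^sub>R g x" using LIMSEQ_ignore_initial_segment[OF sl] .
  have "isCont \<psi> (x - t *\<^sub>R g x)" using h3 oV xV by (simp add: continuous_on_eq_continuous_at)
  then have s'l: "s' \<longlonglongrightarrow> x" unfolding s'_def using isCont_tendsto_compose[OF _ sl'] h2 by metis
  have contA: "isCont A x" using cont unfolding A_def
    by (intro continuous_intros) (simp add: continuous_on_eq_continuous_at)
  have "(\<lambda>k. A (s' k)) \<longlonglongrightarrow> A x" by (rule isCont_tendsto_compose[OF contA s'l])
  moreover have "(\<lambda>k. J (k + N0)) \<longlonglongrightarrow> M" using LIMSEQ_ignore_initial_segment[OF JM] .
  ultimately have "J' \<longlonglongrightarrow> mat 1 - M ** A x" unfolding J'_def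
    by (intro tendsto_diff tendsto_const tendsto_mmul)
  then show ?thesis unfolding bjac_def A_def using der s'l by blast
qed

lemma G2:
  fixes g :: "real^'n \<Rightarrow> real^'n" and P :: "real^'n \<Rightarrow> real^'n"
  assumes hess: "\<And>y. (g has_derivative (\<lambda>v. H y *v v)) (at y)"
    and cont: "continuous_on UNIV H"
    and oU: "open U" and oV: "open V" and xU: "x \<in> U"
    and hom: "homeomorphism U V (\<lambda>y. y - t *\<^sub>R g y) \<psi>"
    and d\<psi>: "\<And>z. z \<in> V \<Longrightarrow> (\<psi> has_derivative \<psi>' z) (at z)"
    and fne: "\<And>a b. norm (P a - P b)^2 \<le> (P a - P b) \<bullet> (a - b)"
    and N: "N \<in> bjac (\<lambda>y. y - P (y - t *\<^sub>R g y)) x"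
  shows "\<exists>M \<in> bjac P (x - t *\<^sub>R g x). N = mat 1 - M ** (mat 1 - t *\<^sub>R H x)"
proof -
  define A where "A y = mat 1 - t *\<^sub>R H y" for y
  define F where "F y = y - P (y - t *\<^sub>R g y)" for y
  define \<phi> where "\<phi> y = y - t *\<^sub>R g y" for y
  obtain s J where d: "\<And>k. (F has_derivative (\<lambda>v. J k *v v)) (at (s k))"
    and sl: "s \<longlonglongrightarrow> x" and JN: "J \<longlonglongrightarrow> N"
    using N unfolding bjac_def F_def by blast
  have "eventually (\<lambda>k. s k \<in> U) sequentially" by (rule topological_tendstoD[OF sl oU xU])
  then obtain N0 where N0: "\<And>k. k \<ge> N0 \<Longrightarrow> s k \<in> U" by (auto simp: eventually_sequentially)
  have h0: "\<And>y. y \<in> U \<Longrightarrow> \<psi> (\<phi> y) = y" and h1: "\<And>z. z \<in> V \<Longrightarrow> \<phi> (\<psi> z) = z"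
    and h4: "\<And>y. y \<in> U \<Longrightarrow> \<phi> y \<in> V" and h5: "\<And>z. z \<in> V \<Longrightarrow> \<psi> z \<in> U"
    using hom unfolding homeomorphism_def \<phi>_def by auto
  define s' where "s' k = s (k + N0)" for k
  define z where "z k = \<phi> (s' k)" for k
  have s'U: "s' k \<in> U" for k using N0 by (simp add: s'_def)
  have zV: "z k \<in> V" for k using h4[OF s'U] by (simp add: z_def)
  have \<psi>z: "\<psi> (z k) = s' k" for k using h0[OF s'U] by (simp add: z_def)
  define L where "L k = (\<lambda>w. \<psi>' (z k) w - J (k + N0) *v (\<psi>' (z k) w))" for k
  have dP: "(P has_derivative L k) (at (z k))" for k
  proof -
    have dF: "(F has_derivative (\<lambda>v. J (k + N0) *v v)) (at (\<psi> (z k)))"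
      unfolding \<psi>z s'_def by (rule d)
    have "((\<lambda>w. \<psi> w - F (\<psi> w)) has_derivative L k) (at (z k))"
      unfolding L_def by (rule has_derivative_diff[OF d\<psi>[OF zV] has_derivative_compose[OF d\<psi>[OF zV] dF]])
    moreover have "\<psi> w - F (\<psi> w) = P w" if "w \<in> V" for w
      using h1[OF that] by (simp add: F_def \<phi>_def)
    ultimately show ?thesis using has_derivative_transform_within_open[OF _ oV zV] by blast
  qed
  define M where "M k = matrix (L k)" for k
  have dPM: "(P has_derivative (\<lambda>w. M k *v w)) (at (z k))" for k
  proof -
    have "bounded_linear (L k)" by (rule has_derivative_bounded_linear[OF dP])
    then have "(\<lambda>w. M k *v w) = L k" unfolding M_def by simp
    then show ?thesis using dP by simp
  qed
  have Mb: "norm (M k *v v) \<le> norm v" for k v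
    by (rule fne_bound) (rule jac_fne[OF fne dPM])
  have JMA: "J (k + N0) = mat 1 - M k ** A (s' k)" for k
  proof -
    have e: "z k = s' k - t *\<^sub>R g (s' k)" by (simp add: z_def \<phi>_def)
    have d': "(P has_derivative (\<lambda>w. M k *v w)) (at (s' k - t *\<^sub>R g (s' k)))"
      using dPM[of k] unfolding e .
    have "(F has_derivative (\<lambda>v. v - M k *v ((mat 1 - t *\<^sub>R H (s' k)) *v v))) (at (s' k))"
      unfolding F_def
      by (rule has_derivative_diff[OF has_derivative_ident has_derivative_compose[OF phi_deriv[OF hess] d']])
    moreover have "(\<lambda>v. v - M k *v ((mat 1 - t *\<^sub>R H (s' k)) *v v)) = (\<lambda>v. (mat 1 - M k ** A (s' k)) *v v)"
      by (simp add: A_def matrix_vector_mult_diff_rdistrib matrix_vector_mul_assoc[symmetric])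
    ultimately have d1: "(F has_derivative (\<lambda>v. (mat 1 - M k ** A (s' k)) *v v)) (at (s' k))" by simp
    have d2: "(F has_derivative (\<lambda>v. J (k + N0) *v v)) (at (s' k))" unfolding s'_def by (rule d)
    have "(\<lambda>v. J (k + N0) *v v) = (\<lambda>v. (mat 1 - M k ** A (s' k)) *v v)"
      by (rule has_derivative_unique[OF d2 d1])
    then show ?thesis by (simp add: matrix_eq fun_eq_iff)
  qed
  have "bounded (range M)"
    unfolding bounded_iff using mat_bound[OF Mb] by blast
  then obtain Ml r where r: "strict_mono r" and Ml: "(M \<circ> r) \<longlonglongrightarrow> Ml"
    using bounded_imp_convergent_subsequence by blast
  have s'l: "s' \<longlonglongrightarrow> x" unfolding s'_def using LIMSEQ_ignore_initial_segment[OF sl] .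
  have c\<phi>: "isCont \<phi> x" unfolding \<phi>_def
    using has_derivative_continuous[OF phi_deriv[OF hess]] by (simp add: continuous_at_imp_continuous_within)
  have zl: "z \<longlonglongrightarrow> \<phi> x" unfolding z_def by (rule isCont_tendsto_compose[OF c\<phi> s'l])
  have "Ml \<in> bjac P (x - t *\<^sub>R g x)"
    unfolding bjac_def
  proof (intro CollectI exI conjI allI)
    show "(P has_derivative (\<lambda>v. (M \<circ> r) k *v v)) (at ((z \<circ> r) k))" for k using dPM by simp
    show "(z \<circ> r) \<longlonglongrightarrow> x - t *\<^sub>R g x" using LIMSEQ_subseq_LIMSEQ[OF zl r] by (simp add: \<phi>_def)
    show "(M \<circ> r) \<longlonglongrightarrow> Ml" by (rule Ml)
  qed
  moreover have "N = mat 1 - Ml ** A x"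
  proof -
    have contA: "isCont A x" using cont unfolding A_def
      by (intro continuous_intros) (simp add: continuous_on_eq_continuous_at)
    have "(\<lambda>k. A (s' k)) \<longlonglongrightarrow> A x" by (rule isCont_tendsto_compose[OF contA s'l])
    then have Ar: "(\<lambda>k. A (s' (r k))) \<longlonglongrightarrow> A x" using LIMSEQ_subseq_LIMSEQ[OF _ r] by (simp add: o_def)
    have Mr: "(\<lambda>k. M (r k)) \<longlonglongrightarrow> Ml" using Ml by (simp add: o_def)
    have l1: "(\<lambda>k. mat 1 - M (r k) ** A (s' (r k))) \<longlonglongrightarrow> mat 1 - Ml ** A x"
      by (intro tendsto_diff tendsto_const tendsto_mmul Mr Ar)
    have "(\<lambda>k. J (k + N0)) \<longlonglongrightarrow> N" using LIMSEQ_ignore_initial_segment[OF JN] .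
    then have "(\<lambda>k. J (r k + N0)) \<longlonglongrightarrow> N" using LIMSEQ_subseq_LIMSEQ[OF _ r] by (simp add: o_def)
    then have l2: "(\<lambda>k. mat 1 - M (r k) ** A (s' (r k))) \<longlonglongrightarrow> N" by (simp add: JMA)
    show ?thesis using LIMSEQ_unique[OF l2 l1] .
  qed
  ultimately show ?thesis unfolding A_def by blast
qed


theorem proposition3p1:
  fixes f :: "real^'n \<Rightarrow> real"
    and g :: "real^'n \<Rightarrow> real^'n"
    and H :: "real^'n \<Rightarrow> real^'n^'n"
    and h :: "real^'n \<Rightarrow> ereal"
    and t :: real and x :: "real^'n"
  assumes grad: "\<And>y. (f has_derivative (\<lambda>v. g y \<bullet> v)) (at y)"
    and hess: "\<And>y. (g has_derivative (\<lambda>v. H y *v v)) (at y)"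
    and hess_cont: "continuous_on UNIV H"
    and h_proper: "proper_fun h" and h_closed: "closed_fun h" and h_convex: "convex_fun h"
    and psd: "\<And>d. 0 \<le> d \<bullet> (H x *v d)"
    and t_pos: "0 < t"
    and t_bound: "lambda_max (H x) \<noteq> 0 \<Longrightarrow> t < 1 / lambda_max (H x)"
  shows "bd_regular (\<lambda>y. y - prox t h (y - t *\<^sub>R g y)) x \<longleftrightarrow>
         (\<forall>M \<in> bjac (prox t h) (x - t *\<^sub>R g x).
            \<forall>d. d \<noteq> 0 \<and> (mat 1 - M) *v d = 0 \<longrightarrow> 0 < d \<bullet> (H x *v d))"
proof -
  have sym: "\<And>u v. u \<bullet> (H x *v v) = v \<bullet> (H x *v u)"
    by (rule hess_sym[OF grad hess hess_cont])
  have inj: "\<And>d. (mat 1 - t *\<^sub>R H x) *v d = 0 \<Longrightarrow> d = 0"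
    by (rule A_injective[OF sym t_pos t_bound])
  have fn: "\<And>a b. norm (prox t h a - prox t h b)^2 \<le> (prox t h a - prox t h b) \<bullet> (a - b)"
    by (rule fne[OF h_proper h_closed h_convex t_pos])
  obtain U V \<psi> \<psi>' where o: "open U" "x \<in> U" "open V" "x - t *\<^sub>R g x \<in> V"
    "homeomorphism U V (\<lambda>y. y - t *\<^sub>R g y) \<psi>"
    "\<And>z. z \<in> V \<Longrightarrow> (\<psi> has_derivative \<psi>' z) (at z)"
    using ift[OF hess hess_cont inj] by blast
  show ?thesis
  proof
    assume bd: "bd_regular (\<lambda>y. y - prox t h (y - t *\<^sub>R g y)) x"
    show "\<forall>M \<in> bjac (prox t h) (x - t *\<^sub>R g x).
            \<forall>d. d \<noteq> 0 \<and> (mat 1 - M) *v d = 0 \<longrightarrow> 0 < d \<bullet> (H x *v d)"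
    proof (intro ballI allI impI)
      fix M d
      assume M: "M \<in> bjac (prox t h) (x - t *\<^sub>R g x)" and dd: "d \<noteq> 0 \<and> (mat 1 - M) *v d = 0"
      show "0 < d \<bullet> (H x *v d)"
      proof (rule ccontr)
        assume nz: "\<not> 0 < d \<bullet> (H x *v d)"
        have z: "(mat 1 - M ** (mat 1 - t *\<^sub>R H x)) *v d = 0"
          using key_b[OF psd sym _ nz] dd by blast
        have "mat 1 - M ** (mat 1 - t *\<^sub>R H x) \<in> bjac (\<lambda>y. y - prox t h (y - t *\<^sub>R g y)) x"
          by (rule G1[OF hess hess_cont o(3) o(2) o(4) o(5) M])
        then have "invertible (mat 1 - M ** (mat 1 - t *\<^sub>R H x))" using bd unfolding bd_regular_def by blast
        then show False using z dd invertible_ker by blast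
      qed
    qed
  next
    assume cond: "\<forall>M \<in> bjac (prox t h) (x - t *\<^sub>R g x).
            \<forall>d. d \<noteq> 0 \<and> (mat 1 - M) *v d = 0 \<longrightarrow> 0 < d \<bullet> (H x *v d)"
    show "bd_regular (\<lambda>y. y - prox t h (y - t *\<^sub>R g y)) x"
      unfolding bd_regular_def
    proof
      fix N assume N: "N \<in> bjac (\<lambda>y. y - prox t h (y - t *\<^sub>R g y)) x"
      obtain M where M: "M \<in> bjac (prox t h) (x - t *\<^sub>R g x)" and NM: "N = mat 1 - M ** (mat 1 - t *\<^sub>R H x)"
        using G2[OF hess hess_cont o(1) o(3) o(2) o(5) o(6) fn N] by blast
      have Mp: "\<And>v. norm (M *v v)^2 \<le> (M *v v) \<bullet> v" by (rule bjac_fne[OF fn M])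
      show "invertible N" unfolding invertible_ker
      proof (intro allI impI)
        fix d assume "N *v d = 0"
        then have "(mat 1 - M) *v d = 0 \<and> d \<bullet> (H x *v d) = 0"
          using key_a[OF psd sym Mp t_pos] NM by blast
        then show "d = 0" using cond M by force
      qed
    qed
  qed
qed

end
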